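(* Let $G$ be a finite group of order $p^a m$, where $p$ is a prime and $m$ is not divisible by $p$, and let $P$ be a Sylow $p$-subgroup of $G$. If $w$ is any group word such that $w(G)$ is nilpotent, then \[ P\cap w(G)=\langle P\cap G_{w^m}\rangle . \]
   Context: For a group word $w$ and a group $G$, $G_w$ denotes the set of all values of $w$ in $G$ and $w(G)=\langle G_w\rangle$ is the verbal subgroup of $w$. For an integer $m$, $G_{w^m}=\{g^m : g\in G_w\}$. *)

theory Defs
  imports "HOL-Algebra.Algebra"
begin

datatype gword = Var nat | One | Mul gword gword | Inv gword

primrec word_eval :: "('a, 'b) monoid_scheme \<Rightarrow> (nat \<Rightarrow> 'a) \<Rightarrow> gword \<Rightarrow> 'a" where
  "word_eval G f (Var i) = f i"
| "word_eval G f One = \<one>\<^bsub>G\<^esub>"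
| "word_eval G f (Mul u v) = word_eval G f u \<otimes>\<^bsub>G\<^esub> word_eval G f v"
| "word_eval G f (Inv u) = inv\<^bsub>G\<^esub> (word_eval G f u)"

definition word_values :: "('a, 'b) monoid_scheme \<Rightarrow> gword \<Rightarrow> 'a set" where
  "word_values G w = {word_eval G f w | f. \<forall>i. f i \<in> carrier G}"

definition verbal :: "('a, 'b) monoid_scheme \<Rightarrow> gword \<Rightarrow> 'a set" where
  "verbal G w = generate G (word_values G w)"

definition word_power_values :: "('a, 'b) monoid_scheme \<Rightarrow> gword \<Rightarrow> nat \<Rightarrow> 'a set" where
  "word_power_values G w m = {g [^]\<^bsub>G\<^esub> m | g. g \<in> word_values G w}"

definition commutator_set :: "('a, 'b) monoid_scheme \<Rightarrow> 'a set \<Rightarrow> 'a set \<Rightarrow> 'a set" where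
  "commutator_set G A B =
     (\<Union>a\<in>A. \<Union>b\<in>B. {a \<otimes>\<^bsub>G\<^esub> b \<otimes>\<^bsub>G\<^esub> inv\<^bsub>G\<^esub> a \<otimes>\<^bsub>G\<^esub> inv\<^bsub>G\<^esub> b})"

primrec lower_central :: "('a, 'b) monoid_scheme \<Rightarrow> nat \<Rightarrow> 'a set" where
  "lower_central G 0 = carrier G"
| "lower_central G (Suc n) = generate G (commutator_set G (lower_central G n) (carrier G))"

definition nilpotent_group :: "('a, 'b) monoid_scheme \<Rightarrow> bool" where
  "nilpotent_group G \<longleftrightarrow> group G \<and> (\<exists>n. lower_central G n = {\<one>\<^bsub>G\<^esub>})"

end

theory Submission
  imports Defs
begin



context group begin

lemma comm_pow_aux1:
  assumes A: "A \<in> carrier G" and B: "B \<in> carrier G" and C: "C \<in> carrier G"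
    and ab: "A \<otimes> B = C \<otimes> B \<otimes> A" and ca: "C \<otimes> A = A \<otimes> C"
  shows "A [^] (i::nat) \<otimes> B = C [^] i \<otimes> B \<otimes> A [^] i"
proof (induction i)
  case 0 then show ?case using B by simp
next
  case (Suc i)
  have ci: "A [^] i \<otimes> C = C \<otimes> A [^] i"
    using group_commutes_pow[OF ca[symmetric] A C] by simp
  have "A [^] Suc i \<otimes> B = A [^] i \<otimes> (A \<otimes> B)" using A B by (simp add: m_assoc)
  also have "\<dots> = A [^] i \<otimes> C \<otimes> B \<otimes> A" using A B C ab by (simp add: m_assoc)
  also have "\<dots> = C \<otimes> (A [^] i \<otimes> B) \<otimes> A" using A B C ci by (simp add: m_assoc)
  also have "\<dots> = C \<otimes> (C [^] i \<otimes> B \<otimes> A [^] i) \<otimes> A" using Suc by simp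
  also have "\<dots> = (C \<otimes> C [^] i) \<otimes> B \<otimes> (A [^] i \<otimes> A)" using A B C by (simp add: m_assoc)
  also have "\<dots> = C [^] Suc i \<otimes> B \<otimes> A [^] Suc i"
    using C by (simp add: nat_pow_Suc2[symmetric])
  finally show ?case .
qed

lemma comm_pow_aux2:
  assumes A: "A \<in> carrier G" and B: "B \<in> carrier G" and C: "C \<in> carrier G"
    and ab: "A \<otimes> B = C \<otimes> B \<otimes> A" and cb: "C \<otimes> B = B \<otimes> C"
  shows "A \<otimes> B [^] (j::nat) = C [^] j \<otimes> B [^] j \<otimes> A"
proof (induction j)
  case 0 then show ?case using A by simp
next
  case (Suc j)
  have cj: "B [^] j \<otimes> C = C \<otimes> B [^] j"
    using group_commutes_pow[OF cb[symmetric] B C] by simp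
  have "A \<otimes> B [^] Suc j = (A \<otimes> B [^] j) \<otimes> B" using A B by (simp add: m_assoc)
  also have "\<dots> = C [^] j \<otimes> B [^] j \<otimes> (A \<otimes> B)" using Suc A B C by (simp add: m_assoc)
  also have "\<dots> = C [^] j \<otimes> (B [^] j \<otimes> C) \<otimes> B \<otimes> A" using A B C ab by (simp add: m_assoc)
  also have "\<dots> = C [^] j \<otimes> (C \<otimes> B [^] j) \<otimes> B \<otimes> A" using cj by simp
  also have "\<dots> = (C [^] j \<otimes> C) \<otimes> (B [^] j \<otimes> B) \<otimes> A" using A B C by (simp add: m_assoc)
  also have "\<dots> = C [^] Suc j \<otimes> B [^] Suc j \<otimes> A" by simp
  finally show ?case .
qed

lemma commutator_trivial:
  assumes A: "A \<in> carrier G" and B: "B \<in> carrier G"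
    and C: "C = A \<otimes> B \<otimes> inv A \<otimes> inv B"
    and ca: "C \<otimes> A = A \<otimes> C" and cb: "C \<otimes> B = B \<otimes> C"
    and s: "A [^] (s::nat) = \<one>" and t: "B [^] (t::nat) = \<one>" and cop: "coprime s t"
  shows "C = \<one>"
proof -
  have Cc: "C \<in> carrier G" using A B C by simp
  have ab: "A \<otimes> B = C \<otimes> B \<otimes> A"
    using A B C by (simp add: m_assoc)
  have "B = C [^] s \<otimes> B" using comm_pow_aux1[OF A B Cc ab ca, of s] s A B Cc by simp
  then have "C [^] s = \<one>" using B Cc
    by (metis l_one r_cancel_one' nat_pow_closed one_closed r_cancel)
  moreover have "A = C [^] t \<otimes> A" using comm_pow_aux2[OF A B Cc ab cb, of t] t A B Cc by simp
  then have "C [^] t = \<one>" using A Cc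
    by (metis l_one nat_pow_closed one_closed r_cancel)
  ultimately have "ord C dvd s" "ord C dvd t" using pow_eq_id[OF Cc] by auto
  then have "ord C = 1" using cop by (meson coprime_common_divisor_nat)
  then show ?thesis using ord_eq_1[OF Cc] by simp
qed

end



context group begin

lemma comm_from_commutator:
  assumes "x \<in> carrier G" "y \<in> carrier G" "x \<otimes> y \<otimes> inv x \<otimes> inv y = \<one>"
  shows "x \<otimes> y = y \<otimes> x"
proof -
  have "x \<otimes> y \<otimes> inv x \<otimes> inv y \<otimes> y \<otimes> x = x \<otimes> y"
    using assms(1,2) by (simp add: m_assoc)
  then show ?thesis using assms by simp
qed

lemma inv_cancel_left': "g \<in> carrier G \<Longrightarrow> z \<in> carrier G \<Longrightarrow> inv g \<otimes> (g \<otimes> z) = z"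
  by (simp add: m_assoc[symmetric])

lemma conj_mult: "g \<in> carrier G \<Longrightarrow> x \<in> carrier G \<Longrightarrow> y \<in> carrier G \<Longrightarrow>
  (g \<otimes> x \<otimes> inv g) \<otimes> (g \<otimes> y \<otimes> inv g) = g \<otimes> (x \<otimes> y) \<otimes> inv g"
  by (simp add: m_assoc inv_cancel_left')

lemma conj_inv: "g \<in> carrier G \<Longrightarrow> x \<in> carrier G \<Longrightarrow>
  inv (g \<otimes> x \<otimes> inv g) = g \<otimes> inv x \<otimes> inv g"
  by (simp add: inv_mult_group m_assoc)

lemma conj_commutator:
  assumes g: "g \<in> carrier G" and a: "a \<in> carrier G" and b: "b \<in> carrier G"
  shows "g \<otimes> (a \<otimes> b \<otimes> inv a \<otimes> inv b) \<otimes> inv g =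
    (g \<otimes> a \<otimes> inv g) \<otimes> (g \<otimes> b \<otimes> inv g) \<otimes> inv (g \<otimes> a \<otimes> inv g) \<otimes> inv (g \<otimes> b \<otimes> inv g)"
proof -
  have "(g \<otimes> a \<otimes> inv g) \<otimes> (g \<otimes> b \<otimes> inv g) \<otimes> inv (g \<otimes> a \<otimes> inv g) \<otimes> inv (g \<otimes> b \<otimes> inv g)
     = (g \<otimes> a \<otimes> inv g) \<otimes> (g \<otimes> b \<otimes> inv g) \<otimes> (g \<otimes> inv a \<otimes> inv g) \<otimes> (g \<otimes> inv b \<otimes> inv g)"
    using assms by (simp only: conj_inv)
  also have "\<dots> = g \<otimes> (a \<otimes> b) \<otimes> inv g \<otimes> (g \<otimes> inv a \<otimes> inv g) \<otimes> (g \<otimes> inv b \<otimes> inv g)"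
    using assms by (simp only: conj_mult)
  also have "\<dots> = g \<otimes> (a \<otimes> b \<otimes> inv a) \<otimes> inv g \<otimes> (g \<otimes> inv b \<otimes> inv g)"
    using assms conj_mult[of g "a \<otimes> b" "inv a"] by simp
  also have "\<dots> = g \<otimes> (a \<otimes> b \<otimes> inv a \<otimes> inv b) \<otimes> inv g"
    using assms conj_mult[of g "a \<otimes> b \<otimes> inv a" "inv b"] by simp
  finally show ?thesis by simp
qed

lemma lower_central_normal: "lower_central G k \<lhd> G"
proof (induction k)
  case 0
  then show ?case by (simp add: normal_self)
next
  case (Suc k)
  have sub: "lower_central G k \<subseteq> carrier G"
    using Suc normal_imp_subgroup subgroup.subset by blast
  show ?case unfolding lower_central.simps
  proof (rule normal_generateI)
    show "commutator_set G (lower_central G k) (carrier G) \<subseteq> carrier G"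
      using sub by (auto simp: commutator_set_def)
  next
    fix h g assume h: "h \<in> commutator_set G (lower_central G k) (carrier G)" and g: "g \<in> carrier G"
    then obtain a b where ab: "a \<in> lower_central G k" "b \<in> carrier G"
      "h = a \<otimes> b \<otimes> inv a \<otimes> inv b"
      by (auto simp: commutator_set_def)
    have a: "a \<in> carrier G" using ab sub by auto
    have "g \<otimes> a \<otimes> inv g \<in> lower_central G k"
      using normal.inv_op_closed2[OF Suc g ab(1)] .
    moreover have "g \<otimes> b \<otimes> inv g \<in> carrier G" using g ab(2) by simp
    ultimately show "g \<otimes> h \<otimes> inv g \<in> commutator_set G (lower_central G k) (carrier G)"
      unfolding ab(3) conj_commutator[OF g a ab(2)] commutator_set_def
      by (intro UN_I[of "g \<otimes> a \<otimes> inv g"] UN_I[of "g \<otimes> b \<otimes> inv g"]) auto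
  qed
qed

lemma nilpotent_coprime_commute:
  assumes nil: "lower_central G n = {\<one>}"
    and a: "a \<in> carrier G" and b: "b \<in> carrier G"
    and s: "a [^] (s::nat) = \<one>" and t: "b [^] (t::nat) = \<one>" and cop: "coprime s t"
  shows "a \<otimes> b = b \<otimes> a"
proof -
  define c where "c = a \<otimes> b \<otimes> inv a \<otimes> inv b"
  have c: "c \<in> carrier G" using a b by (simp add: c_def)
  have "c \<in> lower_central G i" for i
  proof (induction i)
    case 0 then show ?case using c by simp
  next
    case (Suc i)
    define M where "M = lower_central G (Suc i)"
    have nM: "M \<lhd> G" unfolding M_def by (rule lower_central_normal)
    interpret M: normal M G by (rule nM)
    let ?Q = "G Mod M"
    let ?f = "\<lambda>x. M #> x"
    have gQ: "group ?Q" by (rule M.factorgroup_is_group)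
    interpret h: group_hom G ?Q ?f
      by (rule group_hom.intro[OF is_group gQ]) (simp add: group_hom_axioms_def M.r_coset_hom_Mod)
    have sub: "lower_central G i \<subseteq> carrier G"
      using lower_central_normal normal_imp_subgroup subgroup.subset by blast
    have cen: "?f c \<otimes>\<^bsub>?Q\<^esub> ?f x = ?f x \<otimes>\<^bsub>?Q\<^esub> ?f c" if x: "x \<in> carrier G" for x
    proof -
      have "c \<otimes> x \<otimes> inv c \<otimes> inv x \<in> M"
        unfolding M_def lower_central.simps
        by (rule generate.incl) (use Suc x in \<open>auto simp: commutator_set_def\<close>)
      then have "?f (c \<otimes> x \<otimes> inv c \<otimes> inv x) = \<one>\<^bsub>?Q\<^esub>"
        using M.rcos_const[OF is_group] by simp
      then have "?f c \<otimes>\<^bsub>?Q\<^esub> ?f x \<otimes>\<^bsub>?Q\<^esub> inv\<^bsub>?Q\<^esub> ?f c \<otimes>\<^bsub>?Q\<^esub> inv\<^bsub>?Q\<^esub> ?f x = \<one>\<^bsub>?Q\<^esub>"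
        using c x by (simp add: h.hom_mult h.hom_inv)
      moreover have "?f c \<in> carrier ?Q" using c by (rule h.hom_closed)
      moreover have "?f x \<in> carrier ?Q" using x by (rule h.hom_closed)
      ultimately show ?thesis
        by (intro group.comm_from_commutator[OF gQ])
    qed
    have "?f c = \<one>\<^bsub>?Q\<^esub>"
    proof (rule group.commutator_trivial[OF gQ])
      show "?f a \<in> carrier ?Q" "?f b \<in> carrier ?Q" using a b by (simp_all add: h.hom_closed)
      show "?f c = ?f a \<otimes>\<^bsub>?Q\<^esub> ?f b \<otimes>\<^bsub>?Q\<^esub> inv\<^bsub>?Q\<^esub> ?f a \<otimes>\<^bsub>?Q\<^esub> inv\<^bsub>?Q\<^esub> ?f b"
        using a b by (simp add: c_def h.hom_mult h.hom_inv)
      show "?f c \<otimes>\<^bsub>?Q\<^esub> ?f a = ?f a \<otimes>\<^bsub>?Q\<^esub> ?f c" using cen a .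
      show "?f c \<otimes>\<^bsub>?Q\<^esub> ?f b = ?f b \<otimes>\<^bsub>?Q\<^esub> ?f c" using cen b .
      show "?f a [^]\<^bsub>?Q\<^esub> s = \<one>\<^bsub>?Q\<^esub>" using h.hom_nat_pow[OF a, of s] s h.hom_one by metis
      show "?f b [^]\<^bsub>?Q\<^esub> t = \<one>\<^bsub>?Q\<^esub>" using h.hom_nat_pow[OF b, of t] t h.hom_one by metis
      show "coprime s t" by (rule cop)
    qed
    then have "M #> c = M" by simp
    then show ?case using rcos_self[OF c M.subgroup_axioms] by (simp add: M_def)
  qed
  then have "c = \<one>" using nil by blast
  then have "a \<otimes> b \<otimes> inv a \<otimes> inv b = \<one>" by (simp add: c_def)
  then show ?thesis by (rule comm_from_commutator[OF a b])
qed

end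



context group begin

lemma pow_mod_eq:
  assumes x: "x \<in> carrier G" and d: "x [^] (d::nat) = \<one>"
  shows "x [^] (k::nat) = x [^] (k mod d)"
proof -
  have "x [^] (d * (k div d)) \<otimes> x [^] (k mod d) = x [^] (d * (k div d) + k mod d)"
    by (rule nat_pow_mult[OF x])
  also have "d * (k div d) + k mod d = k" by simp
  finally have "x [^] k = x [^] (d * (k div d)) \<otimes> x [^] (k mod d)" by simp
  also have "x [^] (d * (k div d)) = \<one>"
    using x d by (simp add: nat_pow_pow[symmetric])
  finally show ?thesis using x by simp
qed

lemma pow_cong_eq:
  assumes x: "x \<in> carrier G" and d: "x [^] (d::nat) = \<one>" and "k mod d = l mod d"
  shows "x [^] (k::nat) = x [^] l"
  using pow_mod_eq[OF x d, of k] pow_mod_eq[OF x d, of l] assms(3) by simp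

lemma pow_dvd_one:
  assumes x: "x \<in> carrier G" and d: "x [^] (d::nat) = \<one>" and "d dvd k"
  shows "x [^] k = \<one>"
  using assms by (metis dvdE nat_pow_one nat_pow_pow)

lemma subgroup_pow_card:
  assumes "finite (carrier G)" "subgroup H G" "x \<in> H"
  shows "x [^] card H = \<one>"
proof -
  interpret K: group "subgroup_generated G H" by simp
  have "carrier (subgroup_generated G H) = H"
    using assms(2) subgroup.carrier_subgroup_generated_subgroup by blast
  moreover have "finite H" using assms(1,2) finite_subset subgroup.subset by blast
  ultimately have "x [^]\<^bsub>subgroup_generated G H\<^esub> order (subgroup_generated G H) = \<one>\<^bsub>subgroup_generated G H\<^esub>"
    using K.pow_order_eq_1 assms(3) by simp
  then show ?thesis using \<open>carrier _ = H\<close> by (simp add: order_def pow_subgroup_generated)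
qed

lemma crt_exp:
  fixes d1 d2 :: nat
  assumes "coprime d1 d2" "d2 \<noteq> 0"
  obtains e where "e mod d1 = 1 mod d1" "d2 dvd e"
proof -
  obtain x y where "d2 * x = d1 * y + gcd d2 d1" using bezout_nat[OF assms(2)] by blast
  then have "d2 * x = d1 * y + 1" using assms(1) by (simp add: coprime_commute)
  then have "(d2 * x) mod d1 = (1 + d1 * y) mod d1" by simp
  also have "\<dots> = 1 mod d1" by (rule mod_mult_self2)
  finally have "(d2 * x) mod d1 = 1 mod d1" .
  then show ?thesis using that[of "d2 * x"] by simp
qed

end

locale cc_group = group +
  assumes fin: "finite (carrier G)"
    and cc: "\<And>a b s t. a \<in> carrier G \<Longrightarrow> b \<in> carrier G \<Longrightarrow> coprime (s::nat) t \<Longrightarrow>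
       a [^] s = \<one> \<Longrightarrow> b [^] t = \<one> \<Longrightarrow> a \<otimes> b = b \<otimes> a"
begin

definition E :: "nat \<Rightarrow> 'a set" where "E d = {x \<in> carrier G. x [^] d = \<one>}"

lemma E_sub: "E d \<subseteq> carrier G" by (auto simp: E_def)
lemma finite_E: "finite (E d)" using fin E_sub finite_subset by blast

lemma E_1: "E 1 = {\<one>}" by (auto simp: E_def)

lemma proj_E:
  assumes cop: "coprime d1 d2" and pos: "d1 \<noteq> 0" "d2 \<noteq> 0"
    and e: "e mod d1 = 1 mod d1" "d2 dvd e"
    and a: "a \<in> E d1" and b: "b \<in> E d2"
  shows "(a \<otimes> b) [^] e = a" "a \<otimes> b = b \<otimes> a"
proof -
  have ac: "a \<in> carrier G" and bc: "b \<in> carrier G" and a1: "a [^] d1 = \<one>" and b1: "b [^] d2 = \<one>"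
    using a b by (auto simp: E_def)
  show ab: "a \<otimes> b = b \<otimes> a" using cc[OF ac bc cop a1 b1] .
  have "(a \<otimes> b) [^] e = a [^] e \<otimes> b [^] e" using pow_mult_distrib[OF ab ac bc] .
  also have "a [^] e = a [^] (1::nat)" using pow_cong_eq[OF ac a1, of e 1] e(1) by simp
  also have "b [^] e = \<one>" using pow_dvd_one[OF bc b1 e(2)] .
  finally show "(a \<otimes> b) [^] e = a" using ac by (simp del: nat_pow_Suc add: nat_pow_eone)
qed

lemma E_split:
  assumes cop: "coprime d1 d2" and pos: "d1 \<noteq> 0" "d2 \<noteq> 0"
  shows "bij_betw (\<lambda>(a, b). a \<otimes> b) (E d1 \<times> E d2) (E (d1 * d2))"
proof -
  obtain e where e: "e mod d1 = 1 mod d1" "d2 dvd e" using crt_exp[OF cop pos(2)] by blast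
  show ?thesis unfolding bij_betw_def
  proof (intro conjI)
    show "inj_on (\<lambda>(a, b). a \<otimes> b) (E d1 \<times> E d2)"
    proof (rule inj_onI, clarify)
      fix a b a' b' assume a: "a \<in> E d1" and b: "b \<in> E d2" and a': "a' \<in> E d1" and b': "b' \<in> E d2"
        and eq: "a \<otimes> b = a' \<otimes> b'"
      have "a = a'" using proj_E(1)[OF cop pos e a b] proj_E(1)[OF cop pos e a' b'] eq by simp
      moreover have "a \<in> carrier G" "b \<in> carrier G" "b' \<in> carrier G" using a b b' E_sub by auto
      ultimately have "b = b'" using eq l_cancel[of a b b'] by simp
      moreover note \<open>a = a'\<close>
      ultimately show "a = a' \<and> b = b'" by simp
    qed
  next
    show "(\<lambda>(a, b). a \<otimes> b) ` (E d1 \<times> E d2) = E (d1 * d2)"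
    proof (intro equalityI subsetI)
      fix z assume "z \<in> (\<lambda>(a, b). a \<otimes> b) ` (E d1 \<times> E d2)"
      then obtain a b where a: "a \<in> E d1" and b: "b \<in> E d2" and z: "z = a \<otimes> b" by auto
      have ac: "a \<in> carrier G" and bc: "b \<in> carrier G" and a1: "a [^] d1 = \<one>" and b1: "b [^] d2 = \<one>"
        using a b by (auto simp: E_def)
      have ab: "a \<otimes> b = b \<otimes> a" using proj_E(2)[OF cop pos e a b] .
      have "(a \<otimes> b) [^] (d1 * d2) = a [^] (d1 * d2) \<otimes> b [^] (d1 * d2)"
        using pow_mult_distrib[OF ab ac bc] .
      also have "\<dots> = \<one>" using pow_dvd_one[OF ac a1] pow_dvd_one[OF bc b1] by simp
      finally show "z \<in> E (d1 * d2)" using z ac bc by (simp add: E_def)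
    next
      fix x assume x: "x \<in> E (d1 * d2)"
      have xc: "x \<in> carrier G" and x1: "x [^] (d1 * d2) = \<one>" using x by (auto simp: E_def)
      define a where "a = x [^] e"
      define b where "b = inv a \<otimes> x"
      have ac: "a \<in> carrier G" using xc by (simp add: a_def)
      have comm: "a \<otimes> x = x \<otimes> a" unfolding a_def using xc by (simp add: nat_pow_Suc2[symmetric])
      have "a [^] d1 = x [^] (e * d1)" using xc by (simp add: a_def nat_pow_pow)
      also have "\<dots> = \<one>" using pow_dvd_one[OF xc x1] e(2) by simp
      finally have a1: "a [^] d1 = \<one>" .
      have "b [^] d2 = inv a [^] d2 \<otimes> x [^] d2"
      proof -
        have "inv a \<otimes> x = inv a \<otimes> (x \<otimes> a) \<otimes> inv a" using ac xc by (simp add: m_assoc)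
        also have "\<dots> = inv a \<otimes> (a \<otimes> x) \<otimes> inv a" using comm by simp
        also have "\<dots> = x \<otimes> inv a" using ac xc by (simp add: m_assoc[symmetric])
        finally have "inv a \<otimes> x = x \<otimes> inv a" .
        then show ?thesis unfolding b_def by (rule pow_mult_distrib[OF _ inv_closed[OF ac] xc])
      qed
      also have "inv a [^] d2 = inv (x [^] (e * d2))"
        using xc by (simp add: a_def nat_pow_inv nat_pow_pow)
      also have "x [^] (e * d2) = x [^] d2"
      proof (rule pow_cong_eq[OF xc x1])
        have "e * d2 mod (d1 * d2) = (e mod d1) * d2" by (rule mod_mult_mult2)
        also have "\<dots> = (1 mod d1) * d2" using e(1) by simp
        also have "\<dots> = (1 * d2) mod (d1 * d2)" by (rule mod_mult_mult2[symmetric])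
        finally show "e * d2 mod (d1 * d2) = d2 mod (d1 * d2)" by simp
      qed
      finally have b1: "b [^] d2 = \<one>" using xc by simp
      have "x = a \<otimes> b" using ac xc by (simp add: b_def m_assoc[symmetric])
      moreover have "a \<in> E d1" "b \<in> E d2" using ac a1 b1 xc by (auto simp: E_def b_def)
      ultimately show "x \<in> (\<lambda>(a, b). a \<otimes> b) ` (E d1 \<times> E d2)" by auto
    qed
  qed
qed

end



lemma unitary_split:
  fixes n d :: nat
  assumes n: "n > 0" and dn: "d dvd n" and cop: "coprime d (n div d)" and d1: "d \<noteq> 1"
  obtains q k d' where "Factorial_Ring.prime q" "k > 0" "d = q ^ k * d'" "coprime (q ^ k) d'" "d' < d"
    "d' dvd n" "coprime d' (n div d')" "q ^ k dvd n" "\<not> q dvd (n div q ^ k)"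
    "n = q ^ k * (n div q ^ k)"
proof -
  have d0: "d \<noteq> 0" using n dn by auto
  obtain q where q: "Factorial_Ring.prime q" "q dvd d" using prime_factor_nat[OF d1] by blast
  define k where "k = multiplicity q d"
  define d' where "d' = d div q ^ k"
  have qk: "q ^ k dvd d" unfolding k_def by (rule multiplicity_dvd)
  have nq: "\<not> q dvd d'" unfolding d'_def k_def
    using multiplicity_decompose[of d q] not_prime_unit[of q] d0 q by blast
  have k0: "k > 0" unfolding k_def
    using multiplicity_gt_zero_iff[of d q] not_prime_unit[of q] d0 q by blast
  have dd: "d = q ^ k * d'" using qk by (simp add: d'_def)
  have cq: "coprime q d'" using q(1) nq by (simp add: prime_imp_coprime)
  then have c1: "coprime (q ^ k) d'" by simp
  have q2: "q ^ k \<ge> 2"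
  proof -
    have "2 \<le> q" using q(1) by (rule prime_ge_2_nat)
    moreover have "q \<le> q ^ k" using self_le_power[of q k] k0 \<open>2 \<le> q\<close> by simp
    ultimately show ?thesis by simp
  qed
  have d'0: "d' > 0" using d0 dd by (cases "d' = 0") auto
  have lt: "d' < d" using dd q2 d'0 by simp
  obtain c where c: "n = d * c" using dn by blast
  have ndd: "n div d = c" using c d0 by simp
  have cop2: "coprime (q ^ k * d') c" using cop dd ndd by simp
  then have cd': "coprime d' c" and cqc: "coprime (q ^ k) c" by simp_all
  have n1: "n div d' = q ^ k * c" using c dd d'0 by simp
  have n2': "n = q ^ k * (d' * c)" using c dd by (simp add: mult.assoc)
  have qk0: "q ^ k \<noteq> 0" using q2 by linarith
  have n2: "n div q ^ k = d' * c" by (subst n2') (rule nonzero_mult_div_cancel_left[OF qk0])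
  have "coprime d' (n div d')" using n1 cd' c1 by (simp add: coprime_commute)
  moreover have "\<not> q dvd (n div q ^ k)"
  proof
    assume "q dvd n div q ^ k"
    then have "q dvd d' * c" using n2 by simp
    then have "q dvd c" using nq q(1) prime_dvd_mult_iff by blast
    moreover have "coprime q c" using cqc k0 by simp
    ultimately show False using q(1) by (metis coprime_absorb_left not_prime_unit)
  qed
  moreover have "d' dvd n" using c dd by simp
  moreover have "q ^ k dvd n" using c dd by simp
  moreover have "n = q ^ k * (n div q ^ k)" using n2 c dd by simp
  ultimately show ?thesis using that q(1) k0 dd c1 lt by blast
qed

context cc_group begin

lemma card_E_mult:
  assumes "coprime d1 d2" "d1 \<noteq> 0" "d2 \<noteq> 0"
  shows "card (E (d1 * d2)) = card (E d1) * card (E d2)"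
  using bij_betw_same_card[OF E_split[OF assms]] by (simp add: card_cartesian_product)

lemma E_image:
  assumes "coprime d1 d2" "d1 \<noteq> 0" "d2 \<noteq> 0"
  shows "E (d1 * d2) = (\<lambda>(a, b). a \<otimes> b) ` (E d1 \<times> E d2)"
  using bij_betw_imp_surj_on[OF E_split[OF assms]] by simp

lemma E_order: "E (order G) = carrier G"
  using pow_order_eq_1 by (auto simp: E_def)

lemma order_pos: "order G > 0"
  using fin one_closed by (auto simp: order_def card_gt_0_iff)

lemma sylow_sub:
  assumes "Factorial_Ring.prime q" "order G = q ^ k * m'"
  obtains H where "subgroup H G" "card H = q ^ k" "H \<subseteq> E (q ^ k)"
proof -
  have "sylow G q k m'" unfolding sylow_eq sylow_axioms_def using assms fin is_group by simp
  then obtain H where H: "subgroup H G" "card H = q ^ k" using sylow.sylow_thm by blast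
  have "H \<subseteq> E (q ^ k)"
    using subgroup_pow_card[OF fin H(1)] H subgroup.subset[OF H(1)] by (auto simp: E_def)
  then show ?thesis using that H by blast
qed

lemma E_ge:
  "d dvd order G \<Longrightarrow> coprime d (order G div d) \<Longrightarrow> d \<le> card (E d)"
proof (induction d rule: less_induct)
  case (less d)
  show ?case
  proof (cases "d = 1")
    case True show ?thesis unfolding True E_1 by simp
  next
    case False
    obtain q k d' where s: "Factorial_Ring.prime q" "k > 0" "d = q ^ k * d'" "coprime (q ^ k) d'" "d' < d"
      "d' dvd order G" "coprime d' (order G div d')" "q ^ k dvd order G"
      "\<not> q dvd (order G div q ^ k)" "order G = q ^ k * (order G div q ^ k)"
      using unitary_split[OF order_pos less.prems False] by blast
    have ih: "d' \<le> card (E d')" using less.IH[OF s(5,6,7)] .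
    obtain H where H: "subgroup H G" "card H = q ^ k" "H \<subseteq> E (q ^ k)"
      using sylow_sub[OF s(1) s(10)] by blast
    have "q ^ k \<le> card (E (q ^ k))" using card_mono[OF finite_E H(3)] H(2) by simp
    moreover have "d' \<noteq> 0" proof
      assume "d' = 0" then have "d = 0" using s(3) by simp
      then show False using less.prems(1) order_pos by simp
    qed
    moreover have "q ^ k \<noteq> 0" using s(1) by simp
    ultimately show ?thesis using card_E_mult[OF s(4)] s(3) ih by (simp add: mult_le_mono)
  qed
qed

lemma E_card:
  assumes "d dvd order G" "coprime d (order G div d)"
  shows "card (E d) = d"
proof -
  define d2 where "d2 = order G div d"
  have n: "order G = d * d2" using assms(1) by (simp add: d2_def)
  have pos: "d \<noteq> 0" "d2 \<noteq> 0" using n order_pos by auto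
  have cdd: "coprime d d2" using assms(2) d2_def by simp
  have "order G div d2 = d" using n pos by simp
  moreover have "coprime d2 d" using cdd by (rule coprime_commute[THEN iffD1])
  ultimately have c2: "coprime d2 (order G div d2)" by simp
  have g1: "d \<le> card (E d)" using E_ge assms by blast
  have g2: "d2 \<le> card (E d2)" using E_ge[OF _ c2] n by simp
  have "card (E d) * card (E d2) = card (E (d * d2))"
    using card_E_mult[OF cdd pos] by simp
  also have "E (d * d2) = carrier G" using n E_order by simp
  also have "card (carrier G) = d * d2" using n by (simp add: order_def)
  finally have "card (E d) * card (E d2) = d * d2" .
  moreover have B0: "card (E d2) > 0" using g2 pos by simp
  moreover have "d * d2 \<le> d * card (E d2)" using g2 by simp
  ultimately show ?thesis using g1
  proof -
    assume e: "card (E d) * card (E d2) = d * d2" "0 < card (E d2)" "d * d2 \<le> d * card (E d2)"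
    show ?thesis
    proof (rule ccontr)
      assume "card (E d) \<noteq> d"
      then have "d < card (E d)" using g1 by simp
      then have "d * card (E d2) < card (E d) * card (E d2)" using e(2) by simp
      then show False using e by simp
    qed
  qed
qed

lemma E_subgroup:
  "d dvd order G \<Longrightarrow> coprime d (order G div d) \<Longrightarrow> subgroup (E d) G"
proof (induction d rule: less_induct)
  case (less d)
  show ?case
  proof (cases "d = 1")
    case True show ?thesis unfolding True E_1 by (rule triv_subgroup)
  next
    case False
    obtain q k d' where s: "Factorial_Ring.prime q" "k > 0" "d = q ^ k * d'" "coprime (q ^ k) d'" "d' < d"
      "d' dvd order G" "coprime d' (order G div d')" "q ^ k dvd order G"
      "\<not> q dvd (order G div q ^ k)" "order G = q ^ k * (order G div q ^ k)"
      using unitary_split[OF order_pos less.prems False] by blast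
    have ih: "subgroup (E d') G" using less.IH[OF s(5,6,7)] .
    obtain H where H: "subgroup H G" "card H = q ^ k" "H \<subseteq> E (q ^ k)"
      using sylow_sub[OF s(1) s(10)] by blast
    have "coprime (q ^ k) (order G div q ^ k)" using s(1,9) by (simp add: prime_imp_coprime)
    then have "card (E (q ^ k)) = q ^ k" using E_card s(8) by blast
    then have "H = E (q ^ k)" using card_subset_eq[OF finite_E H(3)] H(2) by simp
    then have sq: "subgroup (E (q ^ k)) G" using H(1) by simp
    have d'0: "d' \<noteq> 0" proof
      assume "d' = 0" then have "d = 0" using s(3) by simp
      then show False using less.prems(1) order_pos by simp
    qed
    have q0: "q ^ k \<noteq> 0" using s(1) by simp
    note img = E_image[OF s(4) q0 d'0]
    show ?thesis
    proof (rule subgroupI)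
      show "E d \<subseteq> carrier G" by (rule E_sub)
      show "E d \<noteq> {}" by (auto simp: E_def)
      show "inv h \<in> E d" if "h \<in> E d" for h
        using that by (auto simp: E_def nat_pow_inv)
      show "h1 \<otimes> h2 \<in> E d" if h1: "h1 \<in> E d" and h2: "h2 \<in> E d" for h1 h2
      proof -
        obtain a b where a: "a \<in> E (q ^ k)" and b: "b \<in> E d'" and h1e: "h1 = a \<otimes> b"
          using h1 img s(3) by auto
        obtain a' b' where a': "a' \<in> E (q ^ k)" and b': "b' \<in> E d'" and h2e: "h2 = a' \<otimes> b'"
          using h2 img s(3) by auto
        have c: "a \<in> carrier G" "b \<in> carrier G" "a' \<in> carrier G" "b' \<in> carrier G"
          using a b a' b' E_sub by auto
        have "a' \<otimes> b = b \<otimes> a'"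
          using cc[OF c(3) c(2) s(4)] a' b by (auto simp: E_def)
        then have "h1 \<otimes> h2 = (a \<otimes> a') \<otimes> (b \<otimes> b')"
          using c h1e h2e by (simp add: m_assoc[symmetric]) (simp add: m_assoc)
        moreover have "a \<otimes> a' \<in> E (q ^ k)" using sq a a' by (simp add: subgroup.m_closed)
        moreover have "b \<otimes> b' \<in> E d'" using ih b b' by (simp add: subgroup.m_closed)
        ultimately show ?thesis using img s(3) by auto
      qed
    qed
  qed
qed

end



context group begin

lemma p_group_order:
  assumes fin: "finite (carrier G)" and p: "Factorial_Ring.prime p"
    and all: "\<And>x. x \<in> carrier G \<Longrightarrow> x [^] (p ^ c) = \<one>"
  shows "\<exists>j. order G = p ^ j"
proof -
  define n where "n = order G"
  have n0: "n \<noteq> 0" using fin one_closed by (auto simp: n_def order_def)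
  obtain y where y: "n = p ^ multiplicity p n * y" "\<not> p dvd y"
    using multiplicity_decompose'[of n p] n0 p not_prime_unit[of p] by blast
  have "y = 1"
  proof (rule ccontr)
    assume "y \<noteq> 1"
    then obtain q where q: "Factorial_Ring.prime q" "q dvd y" using prime_factor_nat by blast
    have qp: "q \<noteq> p" using q y(2) by auto
    have qn: "q dvd n" using q(2) y(1) by (metis dvd_mult2 mult.commute)
    define k where "k = multiplicity q n"
    have k0: "k > 0" unfolding k_def
      using multiplicity_gt_zero_iff[of n q] not_prime_unit[of q] n0 q qn by blast
    have "q ^ k dvd n" unfolding k_def by (rule multiplicity_dvd)
    then have "n = q ^ k * (n div q ^ k)" by simp
    then have nk: "order G = q ^ k * (n div q ^ k)" unfolding n_def .
    have "sylow G q k (n div q ^ k)" unfolding sylow_eq sylow_axioms_def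
      using q(1) nk fin is_group by blast
    then obtain H where H: "subgroup H G" "card H = q ^ k" using sylow.sylow_thm by blast
    have "q \<ge> 1" using prime_ge_2_nat[OF q(1)] by simp
    then have "q ^ k \<ge> q" using k0 by (rule self_le_power)
    then have "card H \<ge> 2" using H(2) prime_ge_2_nat[OF q(1)] by simp
    have "\<not> H \<subseteq> {\<one>}"
    proof
      assume "H \<subseteq> {\<one>}"
      then have "card H \<le> 1" using card_mono[of "{\<one>}" H] by simp
      then show False using \<open>card H \<ge> 2\<close> by simp
    qed
    then obtain x where x: "x \<in> H" "x \<noteq> \<one>" by auto
    have xc: "x \<in> carrier G" using subgroup.mem_carrier[OF H(1) x(1)] .
    have "x [^] (q ^ k) = \<one>" using subgroup_pow_card[OF fin H(1) x(1)] H(2) by simp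
    then have d1: "ord x dvd q ^ k" using pow_eq_id[OF xc] by simp
    have d2: "ord x dvd p ^ c" using all[OF xc] pow_eq_id[OF xc] by simp
    have "coprime q p" using primes_coprime[OF q(1) p qp] .
    then have cp: "coprime (q ^ k) (p ^ c)" by simp
    have "ord x = 1" by (rule coprime_common_divisor_nat[OF cp d1 d2])
    then show False using ord_eq_1[OF xc] x(2) by simp
  qed
  then show ?thesis using y(1) by (auto simp: n_def)
qed

lemma conj_pow:
  assumes g: "g \<in> carrier G" and x: "x \<in> carrier G"
  shows "(g \<otimes> x \<otimes> inv g) [^] (k::nat) = g \<otimes> x [^] k \<otimes> inv g"
proof (induction k)
  case 0 then show ?case using g by simp
next
  case (Suc k)
  have "(g \<otimes> x \<otimes> inv g) [^] Suc k = (g \<otimes> x [^] k \<otimes> inv g) \<otimes> (g \<otimes> x \<otimes> inv g)"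
    using Suc by simp
  also have "\<dots> = g \<otimes> (x [^] k \<otimes> x) \<otimes> inv g"
    by (rule conj_mult[OF g]) (use x in simp_all)
  finally show ?case by simp
qed

lemma coset_pow:
  assumes Q: "Q \<lhd> G" and q: "q \<in> Q" and y: "y \<in> carrier G"
  shows "\<exists>q'\<in>Q. (q \<otimes> y) [^] (k::nat) = q' \<otimes> y [^] k"
proof (induction k)
  case 0
  have "\<one> \<in> Q" using subgroup.one_closed[OF normal_imp_subgroup[OF Q]] .
  then show ?case by (intro bexI[of _ "\<one>"]) simp_all
next
  case (Suc k)
  then obtain q' where q': "q' \<in> Q" "(q \<otimes> y) [^] k = q' \<otimes> y [^] k" by blast
  have sQ: "subgroup Q G" using Q normal_imp_subgroup by blast
  have qc: "q \<in> carrier G" "q' \<in> carrier G"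
    using subgroup.mem_carrier[OF sQ q] subgroup.mem_carrier[OF sQ q'(1)] by auto
  have yk: "y [^] k \<in> carrier G" using y by simp
  have c: "y [^] k \<otimes> q \<otimes> inv (y [^] k) \<in> Q" using normal.inv_op_closed2[OF Q yk q] .
  have "(q \<otimes> y) [^] Suc k = q' \<otimes> y [^] k \<otimes> (q \<otimes> y)" using q' by simp
  also have "\<dots> = q' \<otimes> (y [^] k \<otimes> q \<otimes> inv (y [^] k)) \<otimes> (y [^] k \<otimes> y)"
    using qc yk y by (simp add: m_assoc inv_cancel_left')
  also have "y [^] k \<otimes> y = y [^] Suc k" by simp
  finally show ?case using subgroup.m_closed[OF sQ q'(1) c] by blast
qed

lemma normal_p_sub:
  assumes fin: "finite (carrier G)" and p: "Factorial_Ring.prime p"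
    and ord: "order G = p ^ a * m" and pm: "\<not> p dvd m"
    and P: "subgroup P G" and cP: "card P = p ^ a"
    and Q: "Q \<lhd> G" and cQ: "card Q = p ^ b"
  shows "Q \<subseteq> P"
proof -
  have sQ: "subgroup Q G" using Q normal_imp_subgroup by blast
  define S where "S = {q \<otimes> y | q y. q \<in> Q \<and> y \<in> P}"
  have Qc: "\<And>q. q \<in> Q \<Longrightarrow> q \<in> carrier G" by (rule subgroup.mem_carrier[OF sQ])
  have Pc: "\<And>y. y \<in> P \<Longrightarrow> y \<in> carrier G" by (rule subgroup.mem_carrier[OF P])
  have sS: "subgroup S G"
  proof (rule subgroupI)
    show "S \<subseteq> carrier G" using Qc Pc by (auto simp: S_def)
    show "S \<noteq> {}" using sQ P by (auto simp: S_def intro!: exI[of _ \<one>] subgroup.one_closed)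
  next
    fix h assume "h \<in> S"
    then obtain q y where q: "q \<in> Q" and y: "y \<in> P" and h: "h = q \<otimes> y" by (auto simp: S_def)
    have qc: "q \<in> carrier G" and yc: "y \<in> carrier G" using q y Qc Pc by auto
    have c: "inv y \<otimes> inv q \<otimes> inv (inv y) \<in> Q"
      using normal.inv_op_closed2[OF Q inv_closed[OF yc] subgroup.m_inv_closed[OF sQ q]] .
    have "inv h = (inv y \<otimes> inv q \<otimes> inv (inv y)) \<otimes> inv y"
      using qc yc h by (simp add: inv_mult_group m_assoc)
    moreover have "inv y \<in> P" using P y by (simp add: subgroup.m_inv_closed)
    ultimately show "inv h \<in> S" using c by (auto simp: S_def)
  next
    fix h1 h2 assume "h1 \<in> S" "h2 \<in> S"
    then obtain q1 y1 q2 y2 where q: "q1 \<in> Q" "q2 \<in> Q" and y: "y1 \<in> P" "y2 \<in> P"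
      and h: "h1 = q1 \<otimes> y1" "h2 = q2 \<otimes> y2" by (auto simp: S_def)
    have c: "q1 \<in> carrier G" "q2 \<in> carrier G" "y1 \<in> carrier G" "y2 \<in> carrier G"
      using q y Qc Pc by auto
    have cc: "y1 \<otimes> q2 \<otimes> inv y1 \<in> Q" using normal.inv_op_closed2[OF Q c(3) q(2)] .
    have "h1 \<otimes> h2 = (q1 \<otimes> (y1 \<otimes> q2 \<otimes> inv y1)) \<otimes> (y1 \<otimes> y2)"
      using c h by (simp add: m_assoc inv_cancel_left')
    moreover have "q1 \<otimes> (y1 \<otimes> q2 \<otimes> inv y1) \<in> Q" using subgroup.m_closed[OF sQ q(1) cc] .
    moreover have "y1 \<otimes> y2 \<in> P" using subgroup.m_closed[OF P y] .
    ultimately show "h1 \<otimes> h2 \<in> S" by (auto simp: S_def)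
  qed
  have finS: "finite S" using fin sS subgroup.subset finite_subset by blast
  interpret K: group "subgroup_generated G S" by simp
  have cK: "carrier (subgroup_generated G S) = S"
    using sS subgroup.carrier_subgroup_generated_subgroup by blast
  have allS: "x [^] (p ^ (a + b)) = \<one>" if x: "x \<in> S" for x
  proof -
    obtain q y where q: "q \<in> Q" and y: "y \<in> P" and h: "x = q \<otimes> y" using x by (auto simp: S_def)
    obtain q' where q': "q' \<in> Q" "(q \<otimes> y) [^] (p ^ a) = q' \<otimes> y [^] (p ^ a)"
      using coset_pow[OF Q q Pc[OF y]] by blast
    have "y [^] (p ^ a) = \<one>" using subgroup_pow_card[OF fin P y] cP by simp
    then have "x [^] (p ^ a) = q'" using q' h Qc by simp
    moreover have "x [^] (p ^ a * p ^ b) = (x [^] (p ^ a)) [^] (p ^ b)"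
      using subgroup.mem_carrier[OF sS x] by (simp add: nat_pow_pow)
    ultimately have "x [^] (p ^ a * p ^ b) = q' [^] (p ^ b)" by simp
    also have "\<dots> = \<one>" using subgroup_pow_card[OF fin sQ q'(1)] cQ by simp
    finally show ?thesis by (simp add: power_add)
  qed
  have "\<exists>j. order (subgroup_generated G S) = p ^ j"
  proof (rule K.p_group_order[OF _ p])
    show "finite (carrier (subgroup_generated G S))" using cK finS by simp
    show "x [^]\<^bsub>subgroup_generated G S\<^esub> (p ^ (a + b)) = \<one>\<^bsub>subgroup_generated G S\<^esub>"
      if "x \<in> carrier (subgroup_generated G S)" for x
      using allS that cK by (simp add: pow_subgroup_generated)
  qed
  then obtain j where j: "card S = p ^ j" using cK by (auto simp: order_def)
  have "card S dvd order G" using lagrange[OF sS] by (metis dvd_triv_right)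
  then have "p ^ j dvd p ^ a * m" using j ord by simp
  moreover have "coprime (p ^ j) m" using p pm by (simp add: prime_imp_coprime)
  ultimately have "p ^ j dvd p ^ a" using coprime_dvd_mult_left_iff by blast
  then have "card S \<le> card P" using j cP p by (simp add: dvd_imp_le prime_gt_0_nat)
  moreover have PS: "P \<subseteq> S"
  proof
    fix y assume "y \<in> P"
    then have "y = \<one> \<otimes> y" using Pc by simp
    then show "y \<in> S" using \<open>y \<in> P\<close> sQ subgroup.one_closed unfolding S_def by blast
  qed
  ultimately have "P = S" using card_seteq[OF finS PS] by simp
  moreover have "Q \<subseteq> S"
  proof
    fix q assume "q \<in> Q"
    then have "q = q \<otimes> \<one>" using Qc by simp
    then show "q \<in> S" using \<open>q \<in> Q\<close> P subgroup.one_closed unfolding S_def by blast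
  qed
  ultimately show ?thesis by simp
qed

lemma word_eval_closed:
  "(\<And>i. f i \<in> carrier G) \<Longrightarrow> word_eval G f u \<in> carrier G"
  by (induction u) auto

lemma word_eval_conj:
  assumes g: "g \<in> carrier G" and f: "\<And>i. f i \<in> carrier G"
  shows "g \<otimes> word_eval G f u \<otimes> inv g = word_eval G (\<lambda>i. g \<otimes> f i \<otimes> inv g) u"
proof (induction u)
  case (Var i) then show ?case by simp
next
  case One then show ?case using g by (simp add: inv_cancel_left' m_assoc)
next
  case (Mul u v)
  have "g \<otimes> word_eval G f (Mul u v) \<otimes> inv g
     = (g \<otimes> word_eval G f u \<otimes> inv g) \<otimes> (g \<otimes> word_eval G f v \<otimes> inv g)"
    using conj_mult[OF g word_eval_closed[OF f] word_eval_closed[OF f]] by simp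
  then show ?case using Mul by simp
next
  case (Inv u)
  have "g \<otimes> word_eval G f (Inv u) \<otimes> inv g = inv (g \<otimes> word_eval G f u \<otimes> inv g)"
    using conj_inv[OF g word_eval_closed[OF f]] by simp
  then show ?case using Inv by simp
qed

lemma word_values_sub: "word_values G w \<subseteq> carrier G"
  using word_eval_closed by (auto simp: word_values_def)

lemma verbal_normal: "verbal G w \<lhd> G"
  unfolding verbal_def
proof (rule normal_generateI[OF word_values_sub])
  fix h g assume h: "h \<in> word_values G w" and g: "g \<in> carrier G"
  then obtain f where f: "\<And>i. f i \<in> carrier G" and hf: "h = word_eval G f w"
    by (auto simp: word_values_def)
  have "g \<otimes> h \<otimes> inv g = word_eval G (\<lambda>i. g \<otimes> f i \<otimes> inv g) w"
    using word_eval_conj[OF g f] hf by simp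
  moreover have "\<forall>i. g \<otimes> f i \<otimes> inv g \<in> carrier G" using g f by simp
  ultimately show "g \<otimes> h \<otimes> inv g \<in> word_values G w" by (auto simp: word_values_def)
qed

end



context group begin

lemma main_thm:
  fixes p a m :: nat and P :: "'a set" and w :: gword
  assumes "finite (carrier G)"
    and "Factorial_Ring.prime p" and "order G = p ^ a * m" and "\<not> p dvd m"
    and "subgroup P G" and "card P = p ^ a"
    and "nilpotent_group (subgroup_generated G (verbal G w))"
  shows "P \<inter> verbal G w = generate G (P \<inter> word_power_values G w m)"
proof -
  note fin = assms(1) and p = assms(2) and ord = assms(3) and pm = assms(4)
    and P = assms(5) and cP = assms(6) and nil = assms(7)
  define N where "N = verbal G w"
  define K where "K = subgroup_generated G N"
  have nN: "N \<lhd> G" unfolding N_def by (rule verbal_normal)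
  have sN: "subgroup N G" using nN by (rule normal_imp_subgroup)
  have cK: "carrier K = N" unfolding K_def by (rule subgroup.carrier_subgroup_generated_subgroup[OF sN])
  have gK: "group K" unfolding K_def by simp
  have Kops: "monoid.mult K = monoid.mult G" "one K = one G" "(pow K :: _ \<Rightarrow> nat \<Rightarrow> _) = pow G"
    unfolding K_def by (simp_all add: pow_subgroup_generated)
  obtain k where lc: "lower_central K k = {\<one>\<^bsub>K\<^esub>}"
    using nil unfolding nilpotent_group_def K_def N_def by blast
  have NG: "N \<subseteq> carrier G" by (rule subgroup.subset[OF sN])
  have finN: "finite N" by (rule rev_finite_subset[OF fin NG])
  interpret K: cc_group K
  proof (rule cc_group.intro[OF gK])
    show "cc_group_axioms K"
    proof
      show "finite (carrier K)" using cK finN by simp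
    next
      fix x y s t assume h: "x \<in> carrier K" "y \<in> carrier K" "coprime (s::nat) t"
        "x [^]\<^bsub>K\<^esub> s = \<one>\<^bsub>K\<^esub>" "y [^]\<^bsub>K\<^esub> t = \<one>\<^bsub>K\<^esub>"
      show "x \<otimes>\<^bsub>K\<^esub> y = y \<otimes>\<^bsub>K\<^esub> x"
        by (rule group.nilpotent_coprime_commute[OF gK lc h(1) h(2) h(4) h(5) h(3)])
    qed
  qed
  have memE: "x \<in> K.E d \<longleftrightarrow> x \<in> N \<and> x [^] d = \<one>" for x d
    by (simp add: K.E_def cK Kops)
  define n where "n = card N"
  have oK: "order K = n" by (simp add: order_def cK n_def)
  have n0: "n \<noteq> 0" using finN subgroup.one_closed[OF sN] by (auto simp: n_def)
  define b where "b = multiplicity p n"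
  define np where "np = p ^ b"
  define r where "r = n div np"
  have npn: "np dvd n" unfolding np_def b_def by (rule multiplicity_dvd)
  have nr: "n = np * r" using npn by (simp add: r_def)
  have pr: "\<not> p dvd r" unfolding r_def np_def b_def
    using multiplicity_decompose[of n p] not_prime_unit[of p] n0 p by blast
  have cpr: "coprime p r" using p pr by (simp add: prime_imp_coprime)
  have cop: "coprime np r" using cpr by (simp add: np_def)
  have np0: "np \<noteq> 0" and r0: "r \<noteq> 0" using nr n0 by auto
  have rK: "order K div np = r" "order K div r = np" using oK nr np0 r0 by simp_all
  have u1: "np dvd order K" "coprime np (order K div np)" using oK npn rK cop by simp_all
  have u2: "r dvd order K" "coprime r (order K div r)" using oK nr rK cop
    by (simp_all add: coprime_commute)
  define Q where "Q = K.E np"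
  define R where "R = K.E r"
  have memQ: "x \<in> Q \<longleftrightarrow> x \<in> N \<and> x [^] np = \<one>" for x unfolding Q_def by (rule memE)
  have memR: "x \<in> R \<longleftrightarrow> x \<in> N \<and> x [^] r = \<one>" for x unfolding R_def by (rule memE)
  have sQK: "subgroup Q K" unfolding Q_def by (rule K.E_subgroup[OF u1])
  have sRK: "subgroup R K" unfolding R_def by (rule K.E_subgroup[OF u2])
  have sQ: "subgroup Q G" using sQK unfolding K_def subgroup_subgroup_generated_iff by blast
  have sR: "subgroup R G" using sRK unfolding K_def subgroup_subgroup_generated_iff by blast
  have cQ: "card Q = p ^ b" unfolding Q_def using K.E_card[OF u1] by (simp add: np_def)
  have decomp: "N = (\<lambda>(x, y). x \<otimes> y) ` (Q \<times> R)"
  proof -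
    have "K.E (np * r) = (\<lambda>(x, y). x \<otimes>\<^bsub>K\<^esub> y) ` (K.E np \<times> K.E r)"
      by (rule K.E_image[OF cop np0 r0])
    moreover have "K.E (np * r) = N" using K.E_order oK nr cK by simp
    ultimately show ?thesis by (simp add: Q_def R_def Kops)
  qed
  have "n dvd order G" unfolding n_def using lagrange[OF sN] by (metis dvd_triv_right)
  then have "r dvd p ^ a * m" using nr ord by (metis dvd_mult_right)
  moreover have "coprime r (p ^ a)" using cpr by (simp add: coprime_commute)
  ultimately have rm: "r dvd m" using coprime_dvd_mult_right_iff by blast
  have m0: "m \<noteq> 0"
  proof
    assume "m = 0" then have "order G = 0" using ord by simp
    then show False using fin one_closed by (auto simp: order_def)
  qed
  have cnm: "coprime np m" using p pm by (simp add: np_def prime_imp_coprime)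
  obtain e where e: "e mod np = 1 mod np" "m dvd e" using crt_exp[OF cnm m0] by blast
  have re: "r dvd e" using rm e(2) by (rule dvd_trans)
  have proj: "(x \<otimes> y) [^] e = x" "x \<otimes> y = y \<otimes> x" if "x \<in> Q" "y \<in> R" for x y
    using K.proj_E[OF cop np0 r0 e(1) re] that by (simp_all add: Q_def R_def Kops)
  have QG: "x \<in> Q \<Longrightarrow> x \<in> carrier G" for x using memQ NG by blast
  have RG: "x \<in> R \<Longrightarrow> x \<in> carrier G" for x using memR NG by blast
  have pmult: "(z1 \<otimes> z2) [^] e = z1 [^] e \<otimes> z2 [^] e" if z: "z1 \<in> N" "z2 \<in> N" for z1 z2
  proof -
    obtain x1 y1 where x1: "x1 \<in> Q" "y1 \<in> R" "z1 = x1 \<otimes> y1" using z(1) decomp by auto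
    obtain x2 y2 where x2: "x2 \<in> Q" "y2 \<in> R" "z2 = x2 \<otimes> y2" using z(2) decomp by auto
    have c: "x1 \<in> carrier G" "y1 \<in> carrier G" "x2 \<in> carrier G" "y2 \<in> carrier G"
      using x1 x2 QG RG by auto
    have "y1 \<otimes> x2 = x2 \<otimes> y1" using proj(2)[OF x2(1) x1(2)] by simp
    then have "z1 \<otimes> z2 = (x1 \<otimes> x2) \<otimes> (y1 \<otimes> y2)"
      using c x1 x2 by (simp add: m_assoc[symmetric]) (simp add: m_assoc)
    moreover have "x1 \<otimes> x2 \<in> Q" using subgroup.m_closed[OF sQ x1(1) x2(1)] .
    moreover have "y1 \<otimes> y2 \<in> R" using subgroup.m_closed[OF sR x1(2) x2(2)] .
    ultimately have "(z1 \<otimes> z2) [^] e = x1 \<otimes> x2" using proj(1) by simp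
    moreover have "z1 [^] e = x1" "z2 [^] e = x2" using proj(1) x1 x2 by simp_all
    ultimately show ?thesis by simp
  qed
  define V where "V = word_values G w"
  define W where "W = word_power_values G w m"
  have NV: "N = generate G V" by (simp add: N_def V_def verbal_def)
  have VN: "V \<subseteq> N" unfolding NV by (rule subsetI, rule generate.incl)
  have VG: "V \<subseteq> carrier G" unfolding V_def by (rule word_values_sub)
  have WN: "W \<subseteq> Q"
  proof
    fix x assume "x \<in> W"
    then obtain g where g: "g \<in> V" "x = g [^] m" by (auto simp: W_def V_def word_power_values_def)
    have gN: "g \<in> N" using g(1) VN by blast
    have gG: "g \<in> carrier G" using gN NG by blast
    have "g [^] n = \<one>" using subgroup_pow_card[OF fin sN gN] by (simp add: n_def)
    moreover have "n dvd m * np" using rm nr by (simp add: mult.commute)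
    ultimately have "g [^] (m * np) = \<one>" using pow_dvd_one[OF gG] by blast
    then have "x [^] np = \<one>" using g(2) gG by (simp add: nat_pow_pow)
    moreover have "x \<in> N"
      using subgroup_int_pow_closed[OF sN gN, of "int m"] g(2) by (simp add: int_pow_int)
    ultimately show "x \<in> Q" using memQ by simp
  qed
  have nQ: "Q \<lhd> G"
    unfolding normal_inv_iff
  proof (intro conjI ballI)
    show "subgroup Q G" by (rule sQ)
  next
    fix g h assume g: "g \<in> carrier G" and h: "h \<in> Q"
    have hN: "h \<in> N" and h1: "h [^] np = \<one>" using h memQ by auto
    have hG: "h \<in> carrier G" using hN NG by blast
    have "g \<otimes> h \<otimes> inv g \<in> N" using normal.inv_op_closed2[OF nN g hN] .
    moreover have "(g \<otimes> h \<otimes> inv g) [^] np = \<one>"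
      using conj_pow[OF g hG, of np] h1 g by simp
    ultimately show "g \<otimes> h \<otimes> inv g \<in> Q" using memQ by simp
  qed
  have QP: "Q \<subseteq> P" by (rule normal_p_sub[OF fin p ord pm P cP nQ cQ])
  have WP: "P \<inter> W = W" using WN QP by blast
  have sgW: "subgroup (generate G W) G"
    using generate_is_subgroup WN QP subgroup.subset[OF sQ] by blast
  have gen: "z [^] e \<in> generate G W" if "z \<in> generate G V" for z
    using that
  proof (induction rule: generate.induct)
    case one then show ?case by (simp add: generate.one)
  next
    case (incl h)
    have hG: "h \<in> carrier G" using incl VG by blast
    obtain j where j: "e = m * j" using e(2) by blast
    have hm: "h [^] m \<in> W" using incl by (auto simp: W_def V_def word_power_values_def)
    have "h [^] e = (h [^] m) [^] j" using hG j by (simp add: nat_pow_pow)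
    also have "\<dots> \<in> generate G W"
      using subgroup_int_pow_closed[OF sgW generate.incl[OF hm], of "int j"] by (simp add: int_pow_int)
    finally show ?case .
  next
    case (inv h)
    have hG: "h \<in> carrier G" using inv VG by blast
    obtain j where j: "e = m * j" using e(2) by blast
    have hm: "h [^] m \<in> W" using inv by (auto simp: W_def V_def word_power_values_def)
    have "h [^] e = (h [^] m) [^] j" using hG j by (simp add: nat_pow_pow)
    also have "\<dots> \<in> generate G W"
      using subgroup_int_pow_closed[OF sgW generate.incl[OF hm], of "int j"] by (simp add: int_pow_int)
    finally have "h [^] e \<in> generate G W" .
    then have "inv (h [^] e) \<in> generate G W" by (rule subgroup.m_inv_closed[OF sgW])
    then show ?case using hG by (simp add: nat_pow_inv)
  next
    case (eng h1 h2)
    have "h1 \<in> N" "h2 \<in> N" using eng.hyps NV by auto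
    then have "(h1 \<otimes> h2) [^] e = h1 [^] e \<otimes> h2 [^] e" by (rule pmult)
    then show ?case using subgroup.m_closed[OF sgW eng.IH] by simp
  qed
  show ?thesis
  proof
    show "P \<inter> verbal G w \<subseteq> generate G (P \<inter> word_power_values G w m)"
    proof
      fix x assume x: "x \<in> P \<inter> verbal G w"
      then have xP: "x \<in> P" and xN: "x \<in> N" by (auto simp: N_def)
      have xG: "x \<in> carrier G" using xN NG by blast
      have "x [^] (p ^ a) = \<one>" using subgroup_pow_card[OF fin P xP] cP by simp
      then have d1: "ord x dvd p ^ a" using pow_eq_id[OF xG] by simp
      have "x [^] n = \<one>" using subgroup_pow_card[OF fin sN xN] by (simp add: n_def)
      then have d2: "ord x dvd np * r" using pow_eq_id[OF xG] nr by simp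
      obtain i where i: "ord x = p ^ i" using d1 divides_primepow_nat[OF p] by blast
      have "coprime (p ^ i) r" using cpr by simp
      then have "ord x dvd np" using d2 i coprime_dvd_mult_left_iff by metis
      then have "x [^] np = \<one>" using pow_eq_id[OF xG] by simp
      then have xQ: "x \<in> Q" using memQ xN by simp
      have "x [^] e = x" using proj(1)[OF xQ subgroup.one_closed[OF sR]] xG by simp
      moreover have "x \<in> generate G V" using xN NV by simp
      ultimately have "x \<in> generate G W" using gen by metis
      then show "x \<in> generate G (P \<inter> word_power_values G w m)" using WP by (simp add: W_def)
    qed
  next
    have "W \<subseteq> P \<inter> N" using WN QP memQ by blast
    moreover have "subgroup (P \<inter> N) G" by (rule subgroups_Inter_pair[OF P sN])
    ultimately have "generate G W \<subseteq> P \<inter> N" by (rule generate_subgroup_incl)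
    then show "generate G (P \<inter> word_power_values G w m) \<subseteq> P \<inter> verbal G w"
      using WP by (simp add: W_def N_def)
  qed
qed


end

theorem theorem1p4:
  fixes G :: "('a, 'b) monoid_scheme" and p a m :: nat and P :: "'a set" and w :: gword
  assumes "group G" and "finite (carrier G)"
    and "Factorial_Ring.prime p" and "order G = p ^ a * m" and "\<not> p dvd m"
    and "subgroup P G" and "card P = p ^ a"
    and "nilpotent_group (subgroup_generated G (verbal G w))"
  shows "P \<inter> verbal G w = generate G (P \<inter> word_power_values G w m)"
  by (rule group.main_thm[OF assms])


end
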